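(* Let $(X,d)$ be a compact metric space and $\phi\colon\mathbb{R}\times X\to X$ a continuous flow. Then $\phi$ is expansive if and only if $\phi$ is $k^*$-expansive, i.e. for every $\epsilon>0$ there is $\delta>0$ such that whenever $d(\phi_{h(t)}(x),\phi_t(y))<\delta$ for all $t\in\mathbb{R}$, for some $x,y\in X$ and $h\in\mathcal{H}$, there exist $s,t_0\in\mathbb{R}$ with $|s|<\epsilon$ and $\phi_{h(t_0)}(x)=\phi_{t_0+s}(y)$.
   Context: $\mathcal{H}$ is the set of increasing homeomorphisms $h\colon\mathbb{R}\to\mathbb{R}$ with $h(0)=0$. For $x,y\in X$ let $d_\phi(x,y)=\inf\{\operatorname{diam}(\phi_{[a,b]}(z)): z\in X,\ a\le b,\ x,y\in\phi_{[a,b]}(z)\}$ if $y\in\phi_{\mathbb{R}}(x)$ and $d_\phi(x,y)=\operatorname{diam}(X)$ otherwise. $\phi$ is expansive if for every $\beta>0$ there is $\delta>0$ such that whenever $d(\phi_{h(t)}(x),\phi_t(y))<\delta$ for all $t\in\mathbb{R}$ and some $h\in\mathcal{H}$, then $d_\phi(x,y)<\beta$. *)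

theory Defs
  imports "HOL-Analysis.Analysis"
begin

definition is_flow :: "'a::metric_space set \<Rightarrow> (real \<Rightarrow> 'a \<Rightarrow> 'a) \<Rightarrow> bool" where
  "is_flow S phi \<longleftrightarrow>
     continuous_on (UNIV \<times> S) (\<lambda>(t, x). phi t x) \<and>
     (\<forall>t. \<forall>x\<in>S. phi t x \<in> S) \<and>
     (\<forall>x\<in>S. phi 0 x = x) \<and>
     (\<forall>s t. \<forall>x\<in>S. phi (s + t) x = phi s (phi t x))"

definition incr_homeos :: "(real \<Rightarrow> real) set" where
  "incr_homeos = {h. homeomorphism UNIV UNIV h (inv h) \<and> strict_mono h \<and> h 0 = 0}"

definition orbit_dist :: "'a::metric_space set \<Rightarrow> (real \<Rightarrow> 'a \<Rightarrow> 'a) \<Rightarrow> 'a \<Rightarrow> 'a \<Rightarrow> real" where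
  "orbit_dist S phi x y =
     (if y \<in> (\<lambda>t. phi t x) ` UNIV
      then Inf {diameter ((\<lambda>t. phi t z) ` {a..b}) | z a b.
                  z \<in> S \<and> a \<le> b \<and> x \<in> (\<lambda>t. phi t z) ` {a..b} \<and> y \<in> (\<lambda>t. phi t z) ` {a..b}}
      else diameter S)"

definition expansive_flow :: "'a::metric_space set \<Rightarrow> (real \<Rightarrow> 'a \<Rightarrow> 'a) \<Rightarrow> bool" where
  "expansive_flow S phi \<longleftrightarrow>
     (\<forall>\<beta>>0. \<exists>\<delta>>0. \<forall>x\<in>S. \<forall>y\<in>S. \<forall>h\<in>incr_homeos.
        (\<forall>t. dist (phi (h t) x) (phi t y) < \<delta>) \<longrightarrow> orbit_dist S phi x y < \<beta>)"

definition kstar_expansive_flow :: "'a::metric_space set \<Rightarrow> (real \<Rightarrow> 'a \<Rightarrow> 'a) \<Rightarrow> bool" where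
  "kstar_expansive_flow S phi \<longleftrightarrow>
     (\<forall>\<epsilon>>0. \<exists>\<delta>>0. \<forall>x\<in>S. \<forall>y\<in>S. \<forall>h\<in>incr_homeos.
        (\<forall>t. dist (phi (h t) x) (phi t y) < \<delta>) \<longrightarrow>
        (\<exists>s t0. \<bar>s\<bar> < \<epsilon> \<and> phi (h t0) x = phi (t0 + s) y))"

end

theory Submission
  imports Defs
begin

lemma H_intro:
  fixes k g :: "real \<Rightarrow> real"
  assumes "continuous_on UNIV k" "continuous_on UNIV g" "\<And>x. g (k x) = x" "\<And>y. k (g y) = y"
    "strict_mono k" "k 0 = 0"
  shows "k \<in> incr_homeos"
proof -
  have inj: "inj k" using assms(3) by (metis injI)
  have "inv k = g" using inv_f_eq[OF inj] assms(4) by (intro ext) metis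
  moreover have "homeomorphism UNIV UNIV k g"
    unfolding homeomorphism_def using assms by (auto intro: range_eqI[of _ _ "g _"] range_eqI[of _ _ "k _"])
  ultimately show ?thesis using assms unfolding incr_homeos_def by simp
qed

lemma H_props:
  assumes "h \<in> incr_homeos"
  shows "continuous_on UNIV h" "continuous_on UNIV (inv h)" "\<And>x. inv h (h x) = x"
    "\<And>y. h (inv h y) = y" "strict_mono h" "h 0 = 0"
  using assms unfolding incr_homeos_def homeomorphism_def by auto

lemma H_id: "(\<lambda>t. t) \<in> incr_homeos"
  by (rule H_intro[where g="\<lambda>t. t"]) (auto simp: strict_mono_def)

lemma H_shift:
  assumes h: "h \<in> incr_homeos"
  shows "(\<lambda>t. h (t + u) - h u) \<in> incr_homeos"
proof (rule H_intro[where g="\<lambda>w. inv h (w + h u) - u"])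
  note P = H_props[OF h]
  show "continuous_on UNIV (\<lambda>t. h (t + u) - h u)"
    by (intro continuous_intros continuous_on_compose2[OF P(1)]) auto
  show "continuous_on UNIV (\<lambda>w. inv h (w + h u) - u)"
    by (intro continuous_intros continuous_on_compose2[OF P(2)]) auto
  show "strict_mono (\<lambda>t. h (t + u) - h u)"
    using P(5) by (auto simp: strict_mono_def)
qed (use H_props[OF h] in auto)

lemma diam_le:
  fixes T :: "'a::metric_space set"
  assumes "bounded T" "T \<noteq> {}" "\<And>x y. x \<in> T \<Longrightarrow> y \<in> T \<Longrightarrow> dist x y \<le> d"
  shows "diameter T \<le> d"
  using assms unfolding diameter_def by (auto intro!: cSUP_least)


lemma core_pos:
  fixes \<gamma> :: "real \<Rightarrow> 'a::metric_space" and G :: "real \<Rightarrow> real" and P :: "'a set"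
  assumes cg: "continuous_on UNIV \<gamma>" and cG: "continuous_on UNIV G"
    and e: "e > 0" and r: "r > 0"
    and UCw: "\<And>a b. \<bar>a - b\<bar> \<le> 2*e \<Longrightarrow> dist (\<gamma> a) (\<gamma> b) < r/3"
    and cross: "\<And>t u. e \<le> u \<Longrightarrow> u \<le> 2*e \<Longrightarrow> dist (\<gamma> t) (\<gamma> (t+u)) < \<delta> \<Longrightarrow>
        \<exists>p\<in>P. dist (\<gamma> t) p < r/3 \<and> dist (\<gamma> (t+u)) p < r/3"
    and ext: "\<And>p a L. p \<in> P \<Longrightarrow> e \<le> L \<Longrightarrow> (\<forall>v\<in>{0..L}. dist p (\<gamma> (a+v)) \<le> r) \<Longrightarrow>
        dist (\<gamma> a) (\<gamma> (a+L)) < \<delta> \<Longrightarrow> dist p (\<gamma> (a+L)) < r/2 \<and> dist p (\<gamma> a) < r/2"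
    and sh: "\<And>t. dist (\<gamma> (G t)) (\<gamma> t) < \<delta>"
    and t01: "t0 \<le> t1" and lag0: "G t0 - t0 \<le> 2*e" and lag1: "G t1 - t1 > 2*e"
  shows "\<exists>p. \<forall>u\<in>{t1..G t1}. dist p (\<gamma> u) \<le> r"
proof -
  have cgt: "isCont \<gamma> x" for x using cg by (simp add: continuous_on_eq_continuous_at)
  have cGt: "isCont G x" for x using cG by (simp add: continuous_on_eq_continuous_at)
  have cGtt: "continuous_on A (\<lambda>t. G t - t)" for A
    by (intro continuous_intros continuous_on_subset[OF cG]) auto
  define B where "B = {t0..t1} \<inter> {t. G t - t \<le> 2*e}"
  have "closed {t. G t - t \<le> 2*e}"
    by (rule closed_Collect_le[OF cGtt]) (intro continuous_intros)
  then have clB: "closed B" unfolding B_def by auto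
  have B0: "t0 \<in> B" using t01 lag0 unfolding B_def by auto
  have bB: "bdd_above B" unfolding B_def by (rule bdd_aboveI[of _ t1]) auto
  define tc where "tc = Sup B"
  have tcB: "tc \<in> B" unfolding tc_def using closed_contains_Sup[OF _ bB clB] B0 by blast
  have tc: "t0 \<le> tc" "tc \<le> t1" "G tc - tc \<le> 2*e" using tcB unfolding B_def by auto
  have after: "G t - t > 2*e" if "tc < t" "t \<le> t1" for t
  proof (rule ccontr)
    assume "\<not> ?thesis"
    then have "t \<in> B" using that tc unfolding B_def by auto
    then have "t \<le> tc" unfolding tc_def using bB by (rule cSup_upper)
    then show False using that by simp
  qed
  have tc2: "G tc - tc = 2*e"
  proof -
    obtain t where t: "tc \<le> t" "t \<le> t1" "G t - t = 2*e"
      using IVT'[of "\<lambda>t. G t - t" tc "2*e" t1, OF tc(3) _ tc(2) cGtt] lag1 by auto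
    show ?thesis
    proof (cases "t = tc")
      case True then show ?thesis using t by simp
    next
      case False then have "tc < t" using t by simp
      then show ?thesis using after[of t] t by simp
    qed
  qed
  have lagge: "G t - t \<ge> 2*e" if "tc \<le> t" "t \<le> t1" for t
    using that after[of t] tc2 by (cases "t = tc") auto
  have "dist (\<gamma> tc) (\<gamma> (tc + 2*e)) < \<delta>"
    using sh[of tc] tc2 by (simp add: dist_commute algebra_simps)
  then obtain p where pP: "p \<in> P" and ptc: "dist (\<gamma> tc) p < r/3"
    using cross[of "2*e" tc] e by auto
  have near: "dist p (\<gamma> u) < 2*r/3" if "tc \<le> u" "u \<le> G tc" for u
  proof -
    have "dist (\<gamma> u) (\<gamma> tc) < r/3" using that tc2 by (intro UCw) auto
    then show ?thesis using ptc dist_triangle[of p "\<gamma> u" "\<gamma> tc"] by (simp add: dist_commute)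
  qed
  define Fd where "Fd t = dist p (\<gamma> (G t))" for t
  have cFd: "continuous_on A Fd" for A unfolding Fd_def
    by (intro continuous_intros continuous_on_compose2[OF cg] continuous_on_subset[OF cG]) auto
  define A where "A = {tc..t1} \<inter> {t. r/2 \<le> Fd t}"
  have "closed {t. r/2 \<le> Fd t}"
    by (rule closed_Collect_le[OF _ cFd]) (intro continuous_intros)
  then have clA: "closed A" unfolding A_def by auto
  show ?thesis
  proof (cases "A = {}")
    case True
    show ?thesis
    proof (intro exI ballI)
      fix u assume u: "u \<in> {t1..G t1}"
      show "dist p (\<gamma> u) \<le> r"
      proof (cases "u \<le> G tc")
        case True
        then show ?thesis using near[of u] u tc r by auto
      next
        case False
        obtain t where t: "tc \<le> t" "t \<le> t1" "G t = u"
          using IVT'[of G tc u t1, OF _ _ tc(2) continuous_on_subset[OF cG]] False u by auto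
        then have "t \<notin> A" using True by auto
        then have "Fd t < r/2" using t unfolding A_def by auto
        then show ?thesis using t r unfolding Fd_def by simp
      qed
    qed
  next
    case False
    have bA: "bdd_below A" unfolding A_def by (rule bdd_belowI[of _ tc]) auto
    define ts where "ts = Inf A"
    have tsA: "ts \<in> A" unfolding ts_def using closed_contains_Inf[OF False bA clA] .
    have ts: "tc \<le> ts" "ts \<le> t1" "r/2 \<le> Fd ts" using tsA unfolding A_def by auto
    have before: "Fd t < r/2" if "tc \<le> t" "t < ts" for t
    proof (rule ccontr)
      assume "\<not> ?thesis"
      then have "t \<in> A" using that ts unfolding A_def by auto
      then have "ts \<le> t" unfolding ts_def using bA by (rule cInf_lower)
      then show False using that by simp
    qed
    have seg: "dist p (\<gamma> u) \<le> r" if u: "ts \<le> u" "u \<le> G ts" for u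
    proof (cases "u \<le> G tc")
      case True
      then show ?thesis using near[of u] u ts r by auto
    next
      case False
      obtain t where t: "tc \<le> t" "t \<le> ts" "G t = u"
        using IVT'[of G tc u ts, OF _ _ ts(1) continuous_on_subset[OF cG]] False u by auto
      show ?thesis
      proof (cases "t < ts")
        case True
        then have "Fd t < r/2" using before t by simp
        then show ?thesis using t r unfolding Fd_def by simp
      next
        case False
        then have tt: "t = ts" using t by simp
        have "tc \<noteq> ts" using \<open>\<not> u \<le> G tc\<close> t tt by auto
        then have tcts: "tc < ts" using ts by simp
        have Fc: "Fd tc < r/2" using before[of tc] tcts by simp
        have "Fd ts \<le> r/2"
        proof (rule ccontr)
          assume "\<not> ?thesis"
          then obtain t' where t': "tc \<le> t'" "t' \<le> ts" "Fd t' = r/2"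
            using IVT'[of Fd tc "r/2" ts, OF _ _ _ cFd] Fc tcts by auto
          then have "t' \<noteq> ts" using \<open>\<not> Fd ts \<le> r/2\<close> by auto
          then show False using before[of t'] t' by simp
        qed
        then show ?thesis using t tt r unfolding Fd_def by simp
      qed
    qed
    have L: "e \<le> G ts - ts" using lagge[of ts] ts e by simp
    have "\<forall>v\<in>{0..G ts - ts}. dist p (\<gamma> (ts + v)) \<le> r" using seg by auto
    moreover have "dist (\<gamma> ts) (\<gamma> (ts + (G ts - ts))) < \<delta>" using sh[of ts] by (simp add: dist_commute)
    ultimately have "dist p (\<gamma> (ts + (G ts - ts))) < r/2" using ext[OF pP L] by blast
    then show ?thesis using ts(3) unfolding Fd_def by simp
  qed
qed

lemma core_fwd:
  fixes \<gamma> :: "real \<Rightarrow> 'a::metric_space" and G Gi :: "real \<Rightarrow> real" and P :: "'a set"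
  assumes cg: "continuous_on UNIV \<gamma>" and cG: "continuous_on UNIV G" and cGi: "continuous_on UNIV Gi"
    and GGi: "\<And>t. G (Gi t) = t" and GiG: "\<And>t. Gi (G t) = t" and mG: "mono G"
    and e: "e > 0" and r: "r > 0"
    and UCw: "\<And>a b. \<bar>a - b\<bar> \<le> 2*e \<Longrightarrow> dist (\<gamma> a) (\<gamma> b) < r/3"
    and cross: "\<And>t u. e \<le> u \<Longrightarrow> u \<le> 2*e \<Longrightarrow> dist (\<gamma> t) (\<gamma> (t+u)) < \<delta> \<Longrightarrow>
        \<exists>p\<in>P. dist (\<gamma> t) p < r/3 \<and> dist (\<gamma> (t+u)) p < r/3"
    and ext: "\<And>p a L. p \<in> P \<Longrightarrow> e \<le> L \<Longrightarrow> (\<forall>v\<in>{0..L}. dist p (\<gamma> (a+v)) \<le> r) \<Longrightarrow>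
        dist (\<gamma> a) (\<gamma> (a+L)) < \<delta> \<Longrightarrow> dist p (\<gamma> (a+L)) < r/2 \<and> dist p (\<gamma> a) < r/2"
    and sh: "\<And>t. dist (\<gamma> (G t)) (\<gamma> t) < \<delta>"
    and t01: "t0 \<le> t1" and lag0: "\<bar>G t0 - t0\<bar> \<le> 2*e"
  shows "\<exists>p. \<forall>u. min t1 (G t1) \<le> u \<and> u \<le> max t1 (G t1) \<longrightarrow> dist p (\<gamma> u) \<le> r"
proof -
  consider "\<bar>G t1 - t1\<bar> \<le> 2*e" | "G t1 - t1 > 2*e" | "G t1 - t1 < - 2*e" by linarith
  then show ?thesis
  proof cases
    case 1
    show ?thesis
    proof (intro exI[of _ "\<gamma> t1"] allI impI)
      fix u assume u: "min t1 (G t1) \<le> u \<and> u \<le> max t1 (G t1)"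
      have "\<bar>u - t1\<bar> \<le> 2*e"
      proof (cases "t1 \<le> G t1")
        case True
        then have "min t1 (G t1) = t1" "max t1 (G t1) = G t1" by auto
        then have "t1 \<le> u" "u \<le> G t1" using u by auto
        then show ?thesis using 1 unfolding abs_le_iff by auto
      next
        case False
        then have "min t1 (G t1) = G t1" "max t1 (G t1) = t1" by auto
        then have "G t1 \<le> u" "u \<le> t1" using u by auto
        then show ?thesis using 1 unfolding abs_le_iff by auto
      qed
      then have "dist (\<gamma> u) (\<gamma> t1) < r/3" by (rule UCw)
      then show "dist (\<gamma> t1) (\<gamma> u) \<le> r" using r by (simp add: dist_commute)
    qed
  next
    case 2
    have l0: "G t0 - t0 \<le> 2*e" using lag0 by simp
    obtain p where p: "\<forall>u\<in>{t1..G t1}. dist p (\<gamma> u) \<le> r"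
      using core_pos[OF cg cG e r UCw cross ext sh t01 l0 2] by blast
    have mm: "min t1 (G t1) = t1" "max t1 (G t1) = G t1" using 2 e by auto
    show ?thesis using p unfolding mm by (intro exI[of _ p]) auto
  next
    case 3
    have sh': "dist (\<gamma> (Gi t)) (\<gamma> t) < \<delta>" for t
      using sh[of "Gi t"] GGi[of t] by (simp add: dist_commute)
    have o: "G t0 \<le> G t1" using mG t01 by (rule monoD)
    have l0: "Gi (G t0) - G t0 \<le> 2*e" using lag0 GiG by (simp add: abs_le_iff)
    have l1: "Gi (G t1) - G t1 > 2*e" using 3 GiG by simp
    obtain p where p: "\<forall>u\<in>{G t1..Gi (G t1)}. dist p (\<gamma> u) \<le> r"
      using core_pos[OF cg cGi e r UCw cross ext sh' o l0 l1] by blast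
    have mm: "min t1 (G t1) = G t1" "max t1 (G t1) = t1" using 3 e by auto
    show ?thesis using p GiG unfolding mm by (intro exI[of _ p]) auto
  qed
qed

lemma core_all:
  fixes \<gamma> :: "real \<Rightarrow> 'a::metric_space" and G Gi :: "real \<Rightarrow> real" and P :: "'a set"
  assumes cg: "continuous_on UNIV \<gamma>" and cG: "continuous_on UNIV G" and cGi: "continuous_on UNIV Gi"
    and GGi: "\<And>t. G (Gi t) = t" and GiG: "\<And>t. Gi (G t) = t" and mG: "mono G"
    and e: "e > 0" and r: "r > 0"
    and UCw: "\<And>a b. \<bar>a - b\<bar> \<le> 2*e \<Longrightarrow> dist (\<gamma> a) (\<gamma> b) < r/3"
    and cross: "\<And>t u. e \<le> u \<Longrightarrow> u \<le> 2*e \<Longrightarrow> dist (\<gamma> t) (\<gamma> (t+u)) < \<delta> \<Longrightarrow>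
        \<exists>p\<in>P. dist (\<gamma> t) p < r/3 \<and> dist (\<gamma> (t+u)) p < r/3"
    and ext: "\<And>p a L. p \<in> P \<Longrightarrow> e \<le> L \<Longrightarrow> (\<forall>v\<in>{0..L}. dist p (\<gamma> (a+v)) \<le> r) \<Longrightarrow>
        dist (\<gamma> a) (\<gamma> (a+L)) < \<delta> \<Longrightarrow> dist p (\<gamma> (a+L)) < r/2 \<and> dist p (\<gamma> a) < r/2"
    and sh: "\<And>t. dist (\<gamma> (G t)) (\<gamma> t) < \<delta>"
    and lag0: "\<bar>G t0 - t0\<bar> \<le> 2*e"
  shows "\<exists>p. \<forall>u. min t1 (G t1) \<le> u \<and> u \<le> max t1 (G t1) \<longrightarrow> dist p (\<gamma> u) \<le> r"
proof (cases "t0 \<le> t1")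
  case True
  show ?thesis by (rule core_fwd[OF cg cG cGi GGi GiG mG e r UCw cross ext sh True lag0])
next
  case False
  define \<gamma>' where "\<gamma>' t = \<gamma> (- t)" for t
  define G' where "G' t = - G (- t)" for t
  define Gi' where "Gi' t = - Gi (- t)" for t
  have cg': "continuous_on UNIV \<gamma>'" unfolding \<gamma>'_def
    by (intro continuous_on_compose2[OF cg] continuous_intros) auto
  have cG': "continuous_on UNIV G'" unfolding G'_def
    by (intro continuous_intros continuous_on_compose2[OF cG]) auto
  have cGi': "continuous_on UNIV Gi'" unfolding Gi'_def
    by (intro continuous_intros continuous_on_compose2[OF cGi]) auto
  have GGi': "G' (Gi' t) = t" for t unfolding G'_def Gi'_def using GGi by simp
  have GiG': "Gi' (G' t) = t" for t unfolding G'_def Gi'_def using GiG by simp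
  have mG': "mono G'" unfolding G'_def mono_def using mG by (auto simp: mono_def)
  have UCw': "dist (\<gamma>' a) (\<gamma>' b) < r/3" if "\<bar>a - b\<bar> \<le> 2*e" for a b
    unfolding \<gamma>'_def using that by (intro UCw) auto
  have cross': "\<exists>p\<in>P. dist (\<gamma>' t) p < r/3 \<and> dist (\<gamma>' (t+u)) p < r/3"
    if hh: "e \<le> u" "u \<le> 2*e" "dist (\<gamma>' t) (\<gamma>' (t+u)) < \<delta>" for t u
  proof -
    have "dist (\<gamma> (- (t + u))) (\<gamma> (- (t + u) + u)) < \<delta>"
      using hh(3) unfolding \<gamma>'_def by (simp add: dist_commute)
    then obtain p where "p \<in> P" "dist (\<gamma> (- (t + u))) p < r/3" "dist (\<gamma> (- (t + u) + u)) p < r/3"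
      using cross[OF hh(1,2)] by blast
    then show ?thesis unfolding \<gamma>'_def by auto
  qed
  have ext': "dist p (\<gamma>' (a+L)) < r/2 \<and> dist p (\<gamma>' a) < r/2"
    if hh: "p \<in> P" "e \<le> L" "\<forall>v\<in>{0..L}. dist p (\<gamma>' (a+v)) \<le> r" "dist (\<gamma>' a) (\<gamma>' (a+L)) < \<delta>" for p a L
  proof -
    have "\<forall>v\<in>{0..L}. dist p (\<gamma> (- (a + L) + v)) \<le> r"
    proof
      fix v assume v: "v \<in> {0..L}"
      then have "L - v \<in> {0..L}" by auto
      then have "dist p (\<gamma>' (a + (L - v))) \<le> r" using hh(3) by blast
      then show "dist p (\<gamma> (- (a + L) + v)) \<le> r" unfolding \<gamma>'_def by (simp add: algebra_simps)
    qed
    moreover have "dist (\<gamma> (- (a + L))) (\<gamma> (- (a + L) + L)) < \<delta>"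
      using hh(4) unfolding \<gamma>'_def by (simp add: dist_commute)
    ultimately have "dist p (\<gamma> (- (a + L) + L)) < r/2 \<and> dist p (\<gamma> (- (a + L))) < r/2"
      using ext[OF hh(1,2)] by blast
    then show ?thesis unfolding \<gamma>'_def by simp
  qed
  have sh': "dist (\<gamma>' (G' t)) (\<gamma>' t) < \<delta>" for t unfolding \<gamma>'_def G'_def using sh[of "- t"] by simp
  have t01': "- t0 \<le> - t1" using False by simp
  have lag0': "\<bar>G' (- t0) - (- t0)\<bar> \<le> 2*e" unfolding G'_def using lag0 by simp
  obtain p where p: "\<forall>u. min (- t1) (G' (- t1)) \<le> u \<and> u \<le> max (- t1) (G' (- t1)) \<longrightarrow> dist p (\<gamma>' u) \<le> r"
    using core_fwd[OF cg' cG' cGi' GGi' GiG' mG' e r UCw' cross' ext' sh' t01' lag0'] by blast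
  show ?thesis
  proof (intro exI[of _ p] allI impI)
    fix u assume u: "min t1 (G t1) \<le> u \<and> u \<le> max t1 (G t1)"
    have "min (- t1) (G' (- t1)) \<le> - u \<and> - u \<le> max (- t1) (G' (- t1))"
    proof (cases "t1 \<le> G t1")
      case True
      then have "min t1 (G t1) = t1" "max t1 (G t1) = G t1" "min (- t1) (G' (- t1)) = - G t1"
        "max (- t1) (G' (- t1)) = - t1" unfolding G'_def by auto
      then show ?thesis using u by auto
    next
      case False
      then have "min t1 (G t1) = G t1" "max t1 (G t1) = t1" "min (- t1) (G' (- t1)) = - t1"
        "max (- t1) (G' (- t1)) = - G t1" unfolding G'_def by auto
      then show ?thesis using u by auto
    qed
    then have "dist p (\<gamma>' (- u)) \<le> r" using p by blast
    then show "dist p (\<gamma> u) \<le> r" unfolding \<gamma>'_def by simp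
  qed
qed

locale cflow =
  fixes S :: "'a::metric_space set" and phi :: "real \<Rightarrow> 'a \<Rightarrow> 'a"
  assumes cpt: "compact S" and fl: "is_flow S phi"
begin

lemma cont: "continuous_on (UNIV \<times> S) (\<lambda>(t, x). phi t x)"
  using fl by (simp add: is_flow_def)
lemma inS[simp]: "x \<in> S \<Longrightarrow> phi t x \<in> S"
  using fl by (simp add: is_flow_def)
lemma zero[simp]: "x \<in> S \<Longrightarrow> phi 0 x = x"
  using fl by (simp add: is_flow_def)
lemma add: "x \<in> S \<Longrightarrow> phi (s + t) x = phi s (phi t x)"
  using fl by (simp add: is_flow_def)
lemma backw[simp]: "x \<in> S \<Longrightarrow> phi (-t) (phi t x) = x"
  by (metis add zero add.left_inverse)

lemma tendsto:
  assumes "(tn \<longlongrightarrow> t) F" "(xn \<longlongrightarrow> x) F" "x \<in> S" "eventually (\<lambda>n. xn n \<in> S) F"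
  shows "((\<lambda>n. phi (tn n) (xn n)) \<longlongrightarrow> phi t x) F"
proof -
  have "((\<lambda>n. (\<lambda>(t, x). phi t x) (tn n, xn n)) \<longlongrightarrow> (\<lambda>(t, x). phi t x) (t, x)) F"
    by (rule continuous_on_tendsto_compose[OF cont])
       (use assms in \<open>auto intro: tendsto_Pair elim: eventually_mono\<close>)
  then show ?thesis by simp
qed

lemma cont_t: "x \<in> S \<Longrightarrow> continuous_on A (\<lambda>t. phi t x)"
proof -
  assume x: "x \<in> S"
  have "continuous_on UNIV (\<lambda>t. (\<lambda>(t, x). phi t x) ((\<lambda>t. (t, x)) t))"
    by (rule continuous_on_compose2[OF cont]) (use x in \<open>auto intro!: continuous_intros\<close>)
  then show ?thesis by (auto intro: continuous_on_subset)
qed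

lemma isCont_t: "x \<in> S \<Longrightarrow> isCont (\<lambda>t. phi t x) t"
  using cont_t[of x UNIV] by (simp add: continuous_on_eq_continuous_at)

lemma UC:
  assumes "\<eta> > 0"
  shows "\<exists>\<tau>>0. \<forall>w\<in>S. \<forall>u. \<bar>u\<bar> \<le> \<tau> \<longrightarrow> dist (phi u w) w < \<eta>"
proof -
  have "compact ({-1..1::real} \<times> S)" using cpt by (intro compact_Times compact_Icc)
  moreover have "continuous_on ({-1..1} \<times> S) (\<lambda>(t, x). phi t x)"
    by (rule continuous_on_subset[OF cont]) auto
  ultimately have "uniformly_continuous_on ({-1..1} \<times> S) (\<lambda>(t, x). phi t x)"
    by (simp add: compact_uniformly_continuous)
  then obtain d where d: "d > 0" and
    H: "\<forall>x\<in>{-1..1} \<times> S. \<forall>x'\<in>{-1..1} \<times> S. dist x' x < d \<longrightarrow>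
        dist ((\<lambda>(t, x). phi t x) x') ((\<lambda>(t, x). phi t x) x) < \<eta>"
    using assms unfolding uniformly_continuous_on_def by metis
  show ?thesis
  proof (intro exI[of _ "min (d/2) 1"] conjI allI ballI impI)
    fix w u assume w: "w \<in> S" and u: "\<bar>u\<bar> \<le> min (d/2) 1"
    have "dist (u, w) (0, w) = \<bar>u\<bar>" by (simp add: dist_Pair_Pair dist_real_def)
    with u d have "dist (u, w) (0::real, w) < d" by simp
    moreover have "(0::real, w) \<in> {-1..1} \<times> S" "(u, w) \<in> {-1..1} \<times> S" using w u by auto
    ultimately have "dist (phi u w) (phi 0 w) < \<eta>"
      using H by fastforce
    then show "dist (phi u w) w < \<eta>" using w by simp
  qed (use d in auto)
qed

lemma UCpath:
  assumes "\<eta> > 0"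
  shows "\<exists>\<tau>>0. \<forall>y\<in>S. \<forall>a b. \<bar>a - b\<bar> \<le> \<tau> \<longrightarrow> dist (phi a y) (phi b y) < \<eta>"
proof -
  obtain \<tau> where "\<tau> > 0" and H: "\<forall>w\<in>S. \<forall>u. \<bar>u\<bar> \<le> \<tau> \<longrightarrow> dist (phi u w) w < \<eta>"
    using UC[OF assms] by blast
  show ?thesis
  proof (intro exI[of _ \<tau>] conjI ballI allI impI)
    fix y a b assume y: "y \<in> S" and ab: "\<bar>a - b\<bar> \<le> \<tau>"
    have "phi a y = phi (a - b) (phi b y)" using add[OF y, of "a - b" b] by simp
    then show "dist (phi a y) (phi b y) < \<eta>" using H y ab by auto
  qed fact
qed

definition fixd :: "'a \<Rightarrow> bool" where "fixd q \<longleftrightarrow> (\<forall>t. phi t q = q)"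

lemma periodic:
  assumes q: "q \<in> S" and L: "L > 0" and P: "phi L q = q"
  shows "\<exists>v\<in>{0..L}. phi t q = phi v q"
proof -
  have nat: "phi (real n * L) q = q" for n :: nat
  proof (induction n)
    case (Suc n)
    have "phi (real (Suc n) * L) q = phi (real n * L + L) q" by (simp add: algebra_simps)
    also have "\<dots> = phi (real n * L) (phi L q)" using add[OF q] by simp
    finally show ?case using P Suc by simp
  qed (use q in simp)
  have int: "phi (of_int k * L) q = q" for k :: int
  proof (cases "k \<ge> 0")
    case True then show ?thesis using nat[of "nat k"] by simp
  next
    case False
    have "phi (of_int k * L) q = phi (- (real (nat (-k)) * L)) (phi (real (nat (-k)) * L) q)"
      using nat[of "nat (-k)"] False by simp
    also have "\<dots> = q" using q by simp
    finally show ?thesis .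
  qed
  define k where "k = \<lfloor>t / L\<rfloor>"
  define v where "v = t - of_int k * L"
  have "of_int k \<le> t / L" "t / L < of_int k + 1" unfolding k_def by linarith+
  then have v: "0 \<le> v" "v \<le> L" using L unfolding v_def by (auto simp: field_simps)
  have "phi t q = phi v (phi (of_int k * L) q)" using add[OF q, of v "of_int k * L"] by (simp add: v_def)
  then show ?thesis using int v by auto
qed

lemma seg_compact: "z \<in> S \<Longrightarrow> compact ((\<lambda>t. phi t z) ` {a..b})"
  by (intro compact_continuous_image cont_t) auto

lemma seg_bounded: "z \<in> S \<Longrightarrow> bounded ((\<lambda>t. phi t z) ` {a..b})"
  by (rule compact_imp_bounded[OF seg_compact])

lemma od_upper:
  assumes z: "z \<in> S" and ab: "a \<le> b" and xs: "x \<in> (\<lambda>t. phi t z) ` {a..b}"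
    and ys: "y \<in> (\<lambda>t. phi t z) ` {a..b}" and orb: "y \<in> range (\<lambda>t. phi t x)"
  shows "orbit_dist S phi x y \<le> diameter ((\<lambda>t. phi t z) ` {a..b})"
proof -
  let ?X = "{diameter ((\<lambda>t. phi t z) ` {a..b}) | z a b.
                  z \<in> S \<and> a \<le> b \<and> x \<in> (\<lambda>t. phi t z) ` {a..b} \<and> y \<in> (\<lambda>t. phi t z) ` {a..b}}"
  have "bdd_below ?X"
    by (rule bdd_belowI[of _ 0]) (auto intro!: diameter_ge_0 seg_bounded)
  moreover have "diameter ((\<lambda>t. phi t z) ` {a..b}) \<in> ?X" using z ab xs ys by blast
  ultimately have "Inf ?X \<le> diameter ((\<lambda>t. phi t z) ` {a..b})" by (intro cInf_lower)
  then show ?thesis using orb unfolding orbit_dist_def by simp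
qed

lemma od_less:
  assumes x: "x \<in> S" and lt: "orbit_dist S phi x y < \<beta>" and bd: "\<beta> \<le> diameter S"
  shows "y \<in> range (\<lambda>t. phi t x) \<and> (\<exists>z\<in>S. \<exists>a b. a \<le> b \<and> x \<in> (\<lambda>t. phi t z) ` {a..b} \<and>
     y \<in> (\<lambda>t. phi t z) ` {a..b} \<and> diameter ((\<lambda>t. phi t z) ` {a..b}) < \<beta>)"
proof -
  let ?X = "{diameter ((\<lambda>t. phi t z) ` {a..b}) | z a b.
                  z \<in> S \<and> a \<le> b \<and> x \<in> (\<lambda>t. phi t z) ` {a..b} \<and> y \<in> (\<lambda>t. phi t z) ` {a..b}}"
  have orb: "y \<in> range (\<lambda>t. phi t x)"
  proof (rule ccontr)
    assume "y \<notin> range (\<lambda>t. phi t x)"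
    then have "orbit_dist S phi x y = diameter S" unfolding orbit_dist_def by simp
    with lt bd show False by simp
  qed
  then obtain c where c: "y = phi c x" by auto
  have "?X \<noteq> {}"
  proof -
    have "x \<in> (\<lambda>t. phi t x) ` {min 0 c..max 0 c}"
      by (rule image_eqI[where x=0]) (use x in auto)
    moreover have "y \<in> (\<lambda>t. phi t x) ` {min 0 c..max 0 c}" using c by auto
    ultimately have "diameter ((\<lambda>t. phi t x) ` {min 0 c..max 0 c}) \<in> ?X"
      unfolding mem_Collect_eq using x
      by (intro exI[of _ x] exI[of _ "min 0 c"] exI[of _ "max 0 c"]) simp
    then show ?thesis by blast
  qed
  moreover have "Inf ?X < \<beta>" using lt orb unfolding orbit_dist_def by simp
  ultimately obtain d where "d \<in> ?X" "d < \<beta>" by (meson cInf_lessD)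
  then obtain z a b where zab: "z \<in> S" "a \<le> b" "x \<in> (\<lambda>t. phi t z) ` {a..b}" "y \<in> (\<lambda>t. phi t z) ` {a..b}"
     "d = diameter ((\<lambda>t. phi t z) ` {a..b})"
    unfolding mem_Collect_eq by metis
  show ?thesis using orb zab \<open>d < \<beta>\<close> by auto
qed

lemma lim_small:
  fixes X :: "nat \<Rightarrow> real"
  assumes "X \<longlonglongrightarrow> x" "strict_mono \<sigma>" "\<And>n. X n \<le> inverse (real (Suc (\<sigma> n)))"
  shows "x \<le> 0"
proof -
  have "X n \<le> inverse (real (Suc n))" for n
  proof -
    have "n \<le> \<sigma> n" using seq_suble[OF assms(2)] by blast
    then have "inverse (real (Suc (\<sigma> n))) \<le> inverse (real (Suc n))"
      by (intro le_imp_inverse_le) auto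
    then show ?thesis using assms(3)[of n] by linarith
  qed
  then show ?thesis using LIMSEQ_le[OF assms(1) LIMSEQ_inverse_real_of_nat] by auto
qed

lemma dist_lim_zero:
  assumes "(A \<longlongrightarrow> a) sequentially" "(B \<longlongrightarrow> b) sequentially" "strict_mono \<sigma>"
    "\<And>n. dist (A n) (B n) \<le> inverse (real (Suc (\<sigma> n)))"
  shows "a = b"
proof -
  have "((\<lambda>n. dist (A n) (B n)) \<longlongrightarrow> dist a b) sequentially"
    by (intro tendsto_intros assms)
  from lim_small[OF this assms(3,4)] show ?thesis by simp
qed

lemma seq_sub:
  fixes X :: "nat \<Rightarrow> 'a"
  assumes "\<And>n. X n \<in> S"
  obtains l \<sigma> where "l \<in> S" "strict_mono \<sigma>" "(X \<circ> \<sigma>) \<longlonglongrightarrow> l"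
proof -
  have "seq_compact S" by (rule compact_imp_seq_compact[OF cpt])
  moreover have "\<forall>n. X n \<in> S" using assms by blast
  ultimately obtain l \<sigma> where "l \<in> S" "strict_mono (\<sigma>::nat\<Rightarrow>nat)" "(X \<circ> \<sigma>) \<longlonglongrightarrow> l"
    by (rule seq_compactE)
  then show ?thesis using that by blast
qed

lemma lim_close:
  fixes A B :: "nat \<Rightarrow> 'b::metric_space"
  assumes "A \<longlonglongrightarrow> a" "(\<lambda>n. dist (A n) (B n)) \<longlonglongrightarrow> 0"
  shows "B \<longlonglongrightarrow> a"
proof -
  have "(\<lambda>n. dist (A n) a) \<longlonglongrightarrow> 0" using assms(1) tendsto_dist_iff by blast
  then have g: "(\<lambda>n. dist (A n) (B n) + dist (A n) a) \<longlonglongrightarrow> 0"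
    using tendsto_add[OF assms(2)] by fastforce
  have "(\<lambda>n. dist (B n) a) \<longlonglongrightarrow> 0"
  proof (rule Lim_null_comparison[OF _ g])
    show "\<forall>\<^sub>F n in sequentially. norm (dist (B n) a) \<le> dist (A n) (B n) + dist (A n) a"
    proof (intro always_eventually allI)
      fix n
      show "norm (dist (B n) a) \<le> dist (A n) (B n) + dist (A n) a"
        using dist_triangle[of "B n" a "A n"] by (simp add: dist_commute)
    qed
  qed
  then show ?thesis using tendsto_dist_iff by blast
qed


lemma diam0_eq:
  assumes "diameter S \<le> 0" "x \<in> S" "y \<in> S"
  shows "x = y"
  using diameter_bounded_bound[OF compact_imp_bounded[OF cpt] assms(2,3)] assms(1)
  by (metis dist_le_zero_iff order.trans)

lemma E1:
  assumes exp: "expansive_flow S phi"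
  shows "\<exists>\<delta>1>0. \<forall>q\<in>S. \<forall>w\<in>S. fixd q \<and> (\<forall>t. dist q (phi t w) < \<delta>1) \<longrightarrow> w = q"
proof (cases "diameter S \<le> 0")
  case True
  then show ?thesis using diam0_eq[OF True] by (intro exI[of _ 1]) auto
next
  case False
  then obtain \<delta> where "\<delta> > 0" and D: "\<forall>x\<in>S. \<forall>y\<in>S. \<forall>h\<in>incr_homeos.
        (\<forall>t. dist (phi (h t) x) (phi t y) < \<delta>) \<longrightarrow> orbit_dist S phi x y < diameter S"
    using exp unfolding expansive_flow_def by (meson not_le)
  show ?thesis
  proof (intro exI[of _ \<delta>] conjI ballI impI)
    fix q w assume q: "q \<in> S" and w: "w \<in> S" and H: "fixd q \<and> (\<forall>t. dist q (phi t w) < \<delta>)"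
    then have "\<forall>t. dist (phi ((\<lambda>t. t) t) q) (phi t w) < \<delta>" by (simp add: fixd_def)
    then have "orbit_dist S phi q w < diameter S" using D[rule_format, OF q w H_id] by blast
    from od_less[OF q this order.refl] obtain c where "w = phi c q" by auto
    then show "w = q" using H by (simp add: fixd_def)
  qed fact
qed

lemma slow:
  assumes \<epsilon>: "\<epsilon> > 0" and r: "r > 0"
  shows "\<exists>\<eta>>0. \<forall>w\<in>S. (\<forall>t\<in>{0..\<epsilon>}. dist (phi t w) w \<le> \<eta>) \<longrightarrow> (\<exists>q\<in>S. fixd q \<and> dist w q < r)"
proof (rule ccontr)
  assume A: "\<not> ?thesis"
  have "\<exists>w. w \<in> S \<and> (\<forall>t\<in>{0..\<epsilon>}. dist (phi t w) w \<le> inverse (real (Suc n))) \<and>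
      (\<forall>q\<in>S. fixd q \<longrightarrow> dist w q \<ge> r)" for n
  proof -
    have A': "\<forall>\<eta>. \<eta> \<le> 0 \<or> (\<exists>w\<in>S. (\<forall>t\<in>{0..\<epsilon>}. dist (phi t w) w \<le> \<eta>) \<and>
                (\<forall>q\<in>S. fixd q \<longrightarrow> r \<le> dist w q))" using A by (auto simp: not_less)
    have "\<not> inverse (real (Suc n)) \<le> 0" by simp
    then show ?thesis using A'[rule_format, of "inverse (real (Suc n))"] by blast
  qed
  then have "\<forall>n. \<exists>w. w \<in> S \<and> (\<forall>t\<in>{0..\<epsilon>}. dist (phi t w) w \<le> inverse (real (Suc n))) \<and>
      (\<forall>q\<in>S. fixd q \<longrightarrow> dist w q \<ge> r)" by blast
  from choice[OF this] obtain W where W0: "\<forall>n. W n \<in> S \<and> (\<forall>t\<in>{0..\<epsilon>}. dist (phi t (W n)) (W n) \<le> inverse (real (Suc n))) \<and>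
      (\<forall>q\<in>S. fixd q \<longrightarrow> dist (W n) q \<ge> r)" by blast
  then have W: "\<And>n. W n \<in> S"
    "\<And>n t. t \<in> {0..\<epsilon>} \<Longrightarrow> dist (phi t (W n)) (W n) \<le> inverse (real (Suc n))"
    "\<And>n q. q \<in> S \<Longrightarrow> fixd q \<Longrightarrow> dist (W n) q \<ge> r"
    by auto
  obtain l \<sigma> where l: "l \<in> S" "strict_mono \<sigma>" "(W \<circ> \<sigma>) \<longlonglongrightarrow> l"
    by (rule seq_sub[OF W(1)])
  have fix0: "phi v l = l" if v: "v \<in> {0..\<epsilon>}" for v
  proof (rule dist_lim_zero[OF _ _ l(2)])
    show "(\<lambda>n. phi v ((W \<circ> \<sigma>) n)) \<longlonglongrightarrow> phi v l"
      by (rule tendsto[OF tendsto_const l(3) l(1)]) (simp add: W(1))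
    show "\<And>n. dist (phi v ((W \<circ> \<sigma>) n)) ((W \<circ> \<sigma>) n) \<le> inverse (real (Suc (\<sigma> n)))"
      using W(2)[OF v] by simp
  qed (rule l(3))
  have "fixd l" unfolding fixd_def
  proof
    fix t
    obtain v where "v \<in> {0..\<epsilon>}" "phi t l = phi v l"
      using periodic[OF l(1) \<epsilon> fix0[of \<epsilon>]] \<epsilon> by force
    then show "phi t l = l" using fix0 by simp
  qed
  then have ge: "\<And>n. dist ((W \<circ> \<sigma>) n) l \<ge> r" using W(3) l(1) by simp
  have lim: "(\<lambda>n. dist ((W \<circ> \<sigma>) n) l) \<longlonglongrightarrow> 0"
    using tendsto_dist_iff[THEN iffD1, OF l(3)] by simp
  have "r \<le> 0" by (rule LIMSEQ_le_const[OF lim]) (use ge in auto)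
  then show False using r by simp
qed

lemma fast:
  assumes exp: "expansive_flow S phi" and \<epsilon>: "\<epsilon> > 0"
  shows "\<exists>\<eta>>0. \<forall>y\<in>S. \<not> fixd y \<longrightarrow> (\<exists>a b. a \<le> b \<and> b \<le> a + \<epsilon> \<and> dist (phi a y) (phi b y) > \<eta>)"
proof -
  obtain \<delta>1 where d1: "\<delta>1 > 0" and E: "\<forall>q\<in>S. \<forall>w\<in>S. fixd q \<and> (\<forall>t. dist q (phi t w) < \<delta>1) \<longrightarrow> w = q"
    using E1[OF exp] by blast
  define r where "r = \<delta>1 / 4"
  have r: "r > 0" using d1 by (simp add: r_def)
  obtain \<eta> where \<eta>: "\<eta> > 0" and SL: "\<forall>w\<in>S. (\<forall>t\<in>{0..\<epsilon>}. dist (phi t w) w \<le> \<eta>) \<longrightarrow> (\<exists>q\<in>S. fixd q \<and> dist w q < r)"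
    using slow[OF \<epsilon> r] by blast
  show ?thesis
  proof (rule exI[of _ \<eta>], intro conjI ballI impI)
    fix y assume y: "y \<in> S" and nf: "\<not> fixd y"
    show "\<exists>a b. a \<le> b \<and> b \<le> a + \<epsilon> \<and> dist (phi a y) (phi b y) > \<eta>"
    proof (rule ccontr)
      assume "\<not> ?thesis"
      then have sm: "\<And>a b. a \<le> b \<Longrightarrow> b \<le> a + \<epsilon> \<Longrightarrow> dist (phi a y) (phi b y) \<le> \<eta>" by (meson not_le)
      have near: "\<exists>q\<in>S. fixd q \<and> dist (phi t y) q < r" for t
      proof -
        have "\<forall>u\<in>{0..\<epsilon>}. dist (phi u (phi t y)) (phi t y) \<le> \<eta>"
        proof
          fix u assume "u \<in> {0..\<epsilon>}"
          then have "dist (phi t y) (phi (u + t) y) \<le> \<eta>" using sm[of t "u + t"] by auto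
          then show "dist (phi u (phi t y)) (phi t y) \<le> \<eta>" using add[OF y] by (simp add: dist_commute)
        qed
        then show ?thesis using SL y by simp
      qed
      obtain q0 where q0: "q0 \<in> S" "fixd q0" "dist y q0 < r" using near[of 0] y by auto
      have sep: "dist q q0 \<ge> \<delta>1" if "q \<in> S" "fixd q" "q \<noteq> q0" for q
      proof (rule ccontr)
        assume "\<not> ?thesis"
        then have "\<forall>t. dist q (phi t q0) < \<delta>1" using q0(2) by (simp add: fixd_def)
        then show False using E that q0 by blast
      qed
      let ?U = "{t. dist (phi t y) q0 < r}" and ?V = "{t. 2 * r < dist (phi t y) q0}"
      have cd: "continuous_on UNIV (\<lambda>t. dist (phi t y) q0)"
        by (intro continuous_intros cont_t y)
      have "open ?U" by (rule open_Collect_less[OF cd]) (intro continuous_intros)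
      moreover have "open ?V" by (rule open_Collect_less[OF _ cd]) (intro continuous_intros)
      moreover have "?U \<inter> ?V \<inter> UNIV = {}" using r by auto
      moreover have cov: "UNIV \<subseteq> ?U \<union> ?V"
      proof
        fix t :: real
        obtain q where q: "q \<in> S" "fixd q" "dist (phi t y) q < r" using near[of t] by blast
        show "t \<in> ?U \<union> ?V"
        proof (cases "q = q0")
          case True then show ?thesis using q by simp
        next
          case False
          then have "dist q q0 \<ge> \<delta>1" using sep q by blast
          moreover have "dist q q0 \<le> dist q (phi t y) + dist (phi t y) q0" by (rule dist_triangle)
          ultimately have "dist (phi t y) q0 > 2 * r" using q(3) d1 dist_commute[of "phi t y" q] unfolding r_def by linarith
          then show ?thesis by simp
        qed
      qed
      ultimately have "?U \<inter> UNIV = {} \<or> ?V \<inter> UNIV = {}"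
        by (intro connectedD[OF connected_UNIV])
      moreover have "0 \<in> ?U" using q0 y by simp
      ultimately have V: "?V = {}" by auto
      have "\<forall>t. dist q0 (phi t y) < \<delta>1"
      proof
        fix t
        have "t \<in> ?U" using cov V by auto
        then show "dist q0 (phi t y) < \<delta>1" using r unfolding r_def by (simp add: dist_commute)
      qed
      then have "y = q0" using E q0 y by blast
      then show False using nf q0 by simp
    qed
  qed (rule \<eta>)
qed

lemma exp_imp_kstar:
  assumes exp: "expansive_flow S phi"
  shows "kstar_expansive_flow S phi"
  unfolding kstar_expansive_flow_def
proof (intro allI impI)
  fix \<epsilon> :: real assume \<epsilon>: "\<epsilon> > 0"
  show "\<exists>\<delta>>0. \<forall>x\<in>S. \<forall>y\<in>S. \<forall>h\<in>incr_homeos. (\<forall>t. dist (phi (h t) x) (phi t y) < \<delta>) \<longrightarrow>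
          (\<exists>s t0. \<bar>s\<bar> < \<epsilon> \<and> phi (h t0) x = phi (t0 + s) y)"
  proof (cases "diameter S \<le> 0")
    case True
    show ?thesis
    proof (rule exI[of _ 1], intro conjI ballI impI)
      fix x y h assume x: "x \<in> S" and y: "y \<in> S" and h: "h \<in> incr_homeos"
      have "x = y" using diam0_eq[OF True x y] .
      then have "\<bar>0::real\<bar> < \<epsilon> \<and> phi (h 0) x = phi (0 + 0) y"
        using \<epsilon> H_props(6)[OF h] y by simp
      then show "\<exists>s t0. \<bar>s\<bar> < \<epsilon> \<and> phi (h t0) x = phi (t0 + s) y" by blast
    qed simp
  next
    case False
    obtain \<eta> where \<eta>: "\<eta> > 0" and F: "\<forall>y\<in>S. \<not> fixd y \<longrightarrow> (\<exists>a b. a \<le> b \<and> b \<le> a + \<epsilon> \<and> dist (phi a y) (phi b y) > \<eta>)"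
      using fast[OF exp \<epsilon>] by blast
    define \<beta> where "\<beta> = min (\<eta>/2) (diameter S)"
    have \<beta>: "\<beta> > 0" "\<beta> \<le> diameter S" "\<beta> \<le> \<eta>/2" using \<eta> False by (auto simp: \<beta>_def)
    obtain \<delta> where \<delta>: "\<delta> > 0" and D: "\<forall>x\<in>S. \<forall>y\<in>S. \<forall>h\<in>incr_homeos.
        (\<forall>t. dist (phi (h t) x) (phi t y) < \<delta>) \<longrightarrow> orbit_dist S phi x y < \<beta>"
      using exp \<beta>(1) unfolding expansive_flow_def by blast
    show ?thesis
    proof (rule exI[of _ \<delta>], intro conjI ballI impI)
      fix x y h assume x: "x \<in> S" and y: "y \<in> S" and h: "h \<in> incr_homeos"
        and sh: "\<forall>t. dist (phi (h t) x) (phi t y) < \<delta>"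
      note hp = H_props[OF h]
      show "\<exists>s t0. \<bar>s\<bar> < \<epsilon> \<and> phi (h t0) x = phi (t0 + s) y"
      proof (cases "fixd y")
        case True
        have "orbit_dist S phi x y < \<beta>" using D[rule_format, OF x y h] sh by blast
        from od_less[OF x this \<beta>(2)] obtain c where "y = phi c x" by auto
        then have "x = phi (-c) y" using x by simp
        then have "x = y" using True by (simp add: fixd_def)
        then have "\<bar>0::real\<bar> < \<epsilon> \<and> phi (h 0) x = phi (0 + 0) y"
          using \<epsilon> hp(6) y by simp
        then show ?thesis by blast
      next
        case False
        then obtain a b where ab: "a \<le> b" "b \<le> a + \<epsilon>" "dist (phi a y) (phi b y) > \<eta>"
          using F y by blast
        have "\<exists>u. a \<le> u \<and> u \<le> b \<and> dist (phi a y) (phi u y) = \<eta>/2"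
          by (rule IVT'[of "\<lambda>v. dist (phi a y) (phi v y)"])
             (use ab \<eta> y in \<open>auto intro!: continuous_intros cont_t\<close>)
        then obtain u where u: "a \<le> u" "u \<le> b" "dist (phi a y) (phi u y) = \<eta>/2" by blast
        have ub: "dist (phi u y) (phi b y) > \<eta>/2"
          using dist_triangle[of "phi a y" "phi b y" "phi u y"] u(3) ab(3) by (simp add: dist_commute)
        define x' where "x' = phi (h u) x"
        define y' where "y' = phi u y"
        define h' where "h' = (\<lambda>t. h (t + u) - h u)"
        have x': "x' \<in> S" and y': "y' \<in> S" using x y by (auto simp: x'_def y'_def)
        have h': "h' \<in> incr_homeos" unfolding h'_def by (rule H_shift[OF h])
        have "\<forall>t. dist (phi (h' t) x') (phi t y') < \<delta>"
        proof
          fix t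
          have "phi (h' t) x' = phi (h (t + u)) x"
            unfolding h'_def x'_def using add[OF x, of "h (t + u) - h u" "h u"] by simp
          moreover have "phi t y' = phi (t + u) y" unfolding y'_def using add[OF y] by simp
          ultimately show "dist (phi (h' t) x') (phi t y') < \<delta>" using sh by simp
        qed
        then have "orbit_dist S phi x' y' < \<beta>" using D[rule_format, OF x' y' h'] by blast
        from od_less[OF x' this \<beta>(2)] obtain z a' b' where
          z: "z \<in> S" "a' \<le> b'" "x' \<in> (\<lambda>t. phi t z) ` {a'..b'}" "y' \<in> (\<lambda>t. phi t z) ` {a'..b'}"
          "diameter ((\<lambda>t. phi t z) ` {a'..b'}) < \<beta>" by blast
        then obtain p q where pq: "p \<in> {a'..b'}" "q \<in> {a'..b'}" "x' = phi p z" "y' = phi q z" by auto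
        let ?seg = "(\<lambda>t. phi t z) ` {a'..b'}"
        have inseg: "dist v w < \<eta>/2" if "v \<in> ?seg" "w \<in> ?seg" for v w
          using diameter_bounded_bound[OF seg_bounded[OF z(1)] that] z(5) \<beta>(3) by linarith
        have shift: "phi (v + u) y = phi (v + q) z" for v
          using add[OF y, of v u] add[OF z(1), of v q] pq(4) unfolding y'_def by simp
        define s where "s = p - q"
        have eq: "phi (h u) x = phi (u + s) y"
          using shift[of s] pq(3) unfolding s_def x'_def by (simp add: add.commute)
        have "\<bar>s\<bar> < \<epsilon>"
        proof (rule ccontr)
          assume "\<not> \<bar>s\<bar> < \<epsilon>"
          then consider "s \<ge> \<epsilon>" | "s \<le> - \<epsilon>" by linarith
          then show False
          proof cases
            case 1
            have "phi b y = phi ((b - u) + q) z" using shift[of "b - u"] by simp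
            moreover have "(b - u) + q \<in> {a'..b'}" using pq u ab 1 unfolding s_def by auto
            ultimately have "phi b y \<in> ?seg" by auto
            moreover have "phi u y \<in> ?seg" using pq(2,4) unfolding y'_def by auto
            ultimately have "dist (phi u y) (phi b y) < \<eta>/2" using inseg by blast
            then show False using ub by simp
          next
            case 2
            have "phi a y = phi ((a - u) + q) z" using shift[of "a - u"] by simp
            moreover have "(a - u) + q \<in> {a'..b'}" using pq u ab 2 unfolding s_def by auto
            ultimately have "phi a y \<in> ?seg" by auto
            moreover have "phi u y \<in> ?seg" using pq(2,4) unfolding y'_def by auto
            ultimately have "dist (phi a y) (phi u y) < \<eta>/2" using inseg by blast
            then show False using u(3) by simp
          qed
        qed
        then show ?thesis using eq by blast
      qed
    qed (rule \<delta>)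
  qed
qed

lemma F0:
  assumes ks: "kstar_expansive_flow S phi"
  shows "\<exists>\<delta>0>0. \<forall>q\<in>S. \<forall>w\<in>S. fixd q \<and> (\<forall>t. dist q (phi t w) < \<delta>0) \<longrightarrow> w = q"
proof -
  obtain \<delta> where "\<delta> > 0" and D: "\<forall>x\<in>S. \<forall>y\<in>S. \<forall>h\<in>incr_homeos.
        (\<forall>t. dist (phi (h t) x) (phi t y) < \<delta>) \<longrightarrow> (\<exists>s t0. \<bar>s\<bar> < 1 \<and> phi (h t0) x = phi (t0 + s) y)"
  proof -
    have "\<exists>\<delta>>0. \<forall>x\<in>S. \<forall>y\<in>S. \<forall>h\<in>incr_homeos.
        (\<forall>t. dist (phi (h t) x) (phi t y) < \<delta>) \<longrightarrow> (\<exists>s t0. \<bar>s\<bar> < 1 \<and> phi (h t0) x = phi (t0 + s) y)"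
      using ks[unfolded kstar_expansive_flow_def, rule_format, of 1] by simp
    then show ?thesis using that by blast
  qed
  show ?thesis
  proof (rule exI[of _ \<delta>], intro conjI ballI impI)
    fix q w assume q: "q \<in> S" and w: "w \<in> S" and H: "fixd q \<and> (\<forall>t. dist q (phi t w) < \<delta>)"
    then have "\<forall>t. dist (phi ((\<lambda>t. t) t) q) (phi t w) < \<delta>" by (simp add: fixd_def)
    then obtain s t0 where "phi t0 q = phi (t0 + s) w" using D[rule_format, OF q w H_id] by blast
    then have "q = phi (t0 + s) w" using H by (simp add: fixd_def)
    then have "phi (- (t0 + s)) q = w" using backw[OF w, of "t0 + s"] by (simp only:)
    then have "w = phi (- (t0 + s)) q" by (rule sym)
    then show "w = q" using H by (simp add: fixd_def)
  qed (rule \<open>\<delta> > 0\<close>)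
qed

lemma tau0:
  assumes ks: "kstar_expansive_flow S phi"
  shows "\<exists>\<tau>0>0. \<forall>w\<in>S. \<forall>u. 0 < u \<and> u < \<tau>0 \<and> phi u w = w \<longrightarrow> fixd w"
proof (rule ccontr)
  obtain \<delta>0 where d0: "\<delta>0 > 0" and E: "\<forall>q\<in>S. \<forall>w\<in>S. fixd q \<and> (\<forall>t. dist q (phi t w) < \<delta>0) \<longrightarrow> w = q"
    using F0[OF ks] by blast
  assume A: "\<not> ?thesis"
  have "\<exists>wu. fst wu \<in> S \<and> 0 < snd wu \<and> snd wu < inverse (real (Suc n)) \<and> phi (snd wu) (fst wu) = fst wu \<and> \<not> fixd (fst wu)" for n
  proof -
    have "inverse (real (Suc n)) > 0" by simp
    then obtain w u where "w \<in> S" "0 < u" "u < inverse (real (Suc n))" "phi u w = w" "\<not> fixd w"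
      using A by blast
    then show ?thesis by (intro exI[of _ "(w, u)"]) simp
  qed
  then have "\<forall>n. \<exists>wu. fst wu \<in> S \<and> 0 < snd wu \<and> snd wu < inverse (real (Suc n)) \<and> phi (snd wu) (fst wu) = fst wu \<and> \<not> fixd (fst wu)"
    by blast
  from choice[OF this] obtain WU where WU: "\<forall>n. fst (WU n) \<in> S \<and> 0 < snd (WU n) \<and> snd (WU n) < inverse (real (Suc n)) \<and>
      phi (snd (WU n)) (fst (WU n)) = fst (WU n) \<and> \<not> fixd (fst (WU n))"
    by blast
  define W where "W n = fst (WU n)" for n
  define U where "U n = snd (WU n)" for n
  have W: "\<And>n. W n \<in> S" "\<And>n. 0 < U n" "\<And>n. U n < inverse (real (Suc n))"
    "\<And>n. phi (U n) (W n) = W n" "\<And>n. \<not> fixd (W n)"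
    using WU unfolding W_def U_def by auto
  have C: "\<exists>N. \<forall>n\<ge>N. \<forall>t. dist (phi t (W n)) (W n) < \<eta>" if \<eta>: "\<eta> > 0" for \<eta>
  proof -
    obtain \<tau> where \<tau>: "\<tau> > 0" and T: "\<forall>w\<in>S. \<forall>u. \<bar>u\<bar> \<le> \<tau> \<longrightarrow> dist (phi u w) w < \<eta>"
      using UC[OF \<eta>] by blast
    obtain N where N: "inverse (real (Suc N)) < \<tau>" using reals_Archimedean \<tau> by blast
    show ?thesis
    proof (intro exI[of _ N] allI impI)
      fix n t assume n: "N \<le> n"
      have "inverse (real (Suc n)) \<le> inverse (real (Suc N))"
        using n by (intro le_imp_inverse_le) auto
      then have Un: "U n < \<tau>" using W(3)[of n] N by linarith
      obtain v where v: "v \<in> {0..U n}" "phi t (W n) = phi v (W n)"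
        using periodic[OF W(1) W(2) W(4)] by blast
      then show "dist (phi t (W n)) (W n) < \<eta>" using T W(1)[of n] Un by auto
    qed
  qed
  obtain l \<sigma> where l: "l \<in> S" "strict_mono \<sigma>" "(W \<circ> \<sigma>) \<longlonglongrightarrow> l"
    by (rule seq_sub[OF W(1)])
  have lfix: "fixd l" unfolding fixd_def
  proof
    fix t
    have lim: "(\<lambda>n. dist (phi t ((W \<circ> \<sigma>) n)) ((W \<circ> \<sigma>) n)) \<longlonglongrightarrow> dist (phi t l) l"
      by (intro tendsto_intros tendsto[OF tendsto_const l(3) l(1)] l(3)) (simp add: W(1))
    have "dist (phi t l) l \<le> \<eta>" if eta: "\<eta> > 0" for \<eta>
    proof -
      obtain N where N: "\<forall>n\<ge>N. \<forall>t. dist (phi t (W n)) (W n) < \<eta>" using C[OF eta] by blast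
      have "\<forall>n\<ge>N. dist (phi t ((W \<circ> \<sigma>) n)) ((W \<circ> \<sigma>) n) \<le> \<eta>"
      proof (intro allI impI)
        fix n assume "N \<le> n"
        then have "N \<le> \<sigma> n" using seq_suble[OF l(2), of n] by linarith
        then show "dist (phi t ((W \<circ> \<sigma>) n)) ((W \<circ> \<sigma>) n) \<le> \<eta>" using N by (simp add: less_imp_le)
      qed
      then show ?thesis by (intro LIMSEQ_le_const2[OF lim]) blast
    qed
    then have "dist (phi t l) l \<le> 0" by (meson dense_ge)
    then show "phi t l = l" by simp
  qed
  have d0h: "\<delta>0 / 2 > 0" using d0 by simp
  obtain N1 where N1: "\<forall>n\<ge>N1. \<forall>t. dist (phi t (W n)) (W n) < \<delta>0 / 2" using C[OF d0h] by blast
  have "\<forall>r>0. \<exists>no. \<forall>n\<ge>no. dist ((W \<circ> \<sigma>) n) l < r"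
    using l(3) unfolding lim_sequentially .
  then obtain N2 where N2: "\<forall>n\<ge>N2. dist ((W \<circ> \<sigma>) n) l < \<delta>0 / 2"
    using d0h by blast
  define n where "n = max N1 N2"
  have "\<sigma> n \<ge> N1" using seq_suble[OF l(2), of n] unfolding n_def by linarith
  then have a: "\<forall>t. dist (phi t (W (\<sigma> n))) (W (\<sigma> n)) < \<delta>0 / 2" using N1 by blast
  have b: "dist (W (\<sigma> n)) l < \<delta>0 / 2" using N2 unfolding n_def by simp
  have "\<forall>t. dist l (phi t (W (\<sigma> n))) < \<delta>0"
  proof
    fix t
    have "dist l (phi t (W (\<sigma> n))) \<le> dist l (W (\<sigma> n)) + dist (W (\<sigma> n)) (phi t (W (\<sigma> n)))"
      by (rule dist_triangle)
    then show "dist l (phi t (W (\<sigma> n))) < \<delta>0" using a[rule_format, of t] b by (simp add: dist_commute)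
  qed
  then have "W (\<sigma> n) = l" using E l(1) W(1) lfix by blast
  then show False using W(5) lfix by metis
qed

lemma crossing:
  assumes \<tau>0: "\<forall>w\<in>S. \<forall>u. 0 < u \<and> u < \<tau>0 \<and> phi u w = w \<longrightarrow> fixd w"
    and e: "e > 0" "2 * e < \<tau>0" and \<rho>: "\<rho> > 0"
  shows "\<exists>\<delta>2>0. \<forall>w\<in>S. \<forall>u\<in>{e..2*e}. dist (phi u w) w < \<delta>2 \<longrightarrow> (\<exists>p\<in>S. fixd p \<and> dist w p < \<rho>)"
proof (rule ccontr)
  assume A: "\<not> ?thesis"
  have "\<exists>wu. fst wu \<in> S \<and> snd wu \<in> {e..2*e} \<and> dist (phi (snd wu) (fst wu)) (fst wu) < inverse (real (Suc n)) \<and>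
       (\<forall>p\<in>S. fixd p \<longrightarrow> dist (fst wu) p \<ge> \<rho>)" for n
  proof -
    have A': "\<forall>\<delta>2. \<delta>2 \<le> 0 \<or> (\<exists>w\<in>S. (\<exists>u\<in>{e..2 * e}. dist (phi u w) w < \<delta>2) \<and>
                  (\<forall>p\<in>S. fixd p \<longrightarrow> \<rho> \<le> dist w p))" using A by (auto simp: not_less)
    have "\<not> inverse (real (Suc n)) \<le> 0" by simp
    then obtain w u where "w \<in> S" "u \<in> {e..2*e}" "dist (phi u w) w < inverse (real (Suc n))"
       "\<forall>p\<in>S. fixd p \<longrightarrow> dist w p \<ge> \<rho>"
      using A'[rule_format, of "inverse (real (Suc n))"] by blast
    then show ?thesis by (intro exI[of _ "(w, u)"]) simp
  qed
  then have "\<forall>n. \<exists>wu. fst wu \<in> S \<and> snd wu \<in> {e..2*e} \<and> dist (phi (snd wu) (fst wu)) (fst wu) < inverse (real (Suc n)) \<and>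
       (\<forall>p\<in>S. fixd p \<longrightarrow> dist (fst wu) p \<ge> \<rho>)" by blast
  from choice[OF this] obtain WU where WU: "\<forall>n. fst (WU n) \<in> S \<and> snd (WU n) \<in> {e..2*e} \<and>
       dist (phi (snd (WU n)) (fst (WU n))) (fst (WU n)) < inverse (real (Suc n)) \<and>
       (\<forall>p\<in>S. fixd p \<longrightarrow> dist (fst (WU n)) p \<ge> \<rho>)" by blast
  define W where "W n = fst (WU n)" for n
  define U where "U n = snd (WU n)" for n
  have W: "\<And>n. W n \<in> S" "\<And>n. U n \<in> {e..2*e}"
    "\<And>n. dist (phi (U n) (W n)) (W n) < inverse (real (Suc n))"
    "\<And>n p. p \<in> S \<Longrightarrow> fixd p \<Longrightarrow> dist (W n) p \<ge> \<rho>"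
    using WU unfolding W_def U_def by auto
  have "compact (S \<times> {e..2*e})" using cpt by (intro compact_Times compact_Icc)
  then have "seq_compact (S \<times> {e..2*e})" by (rule compact_imp_seq_compact)
  moreover have "\<forall>n. (\<lambda>n. (W n, U n)) n \<in> S \<times> {e..2*e}" using W by auto
  ultimately obtain lv \<sigma> where lv: "lv \<in> S \<times> {e..2*e}" "strict_mono (\<sigma>::nat\<Rightarrow>nat)"
      "((\<lambda>n. (W n, U n)) \<circ> \<sigma>) \<longlonglongrightarrow> lv"
    by (rule seq_compactE)
  obtain l v where lvd: "lv = (l, v)" by fastforce
  have l: "l \<in> S" "v \<in> {e..2*e}" using lv(1) lvd by auto
  have Wl: "(W \<circ> \<sigma>) \<longlonglongrightarrow> l" using tendsto_fst[OF lv(3)] lvd by (simp add: o_def)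
  have Uv: "(U \<circ> \<sigma>) \<longlonglongrightarrow> v" using tendsto_snd[OF lv(3)] lvd by (simp add: o_def)
  have "phi v l = l"
  proof (rule dist_lim_zero[OF _ Wl lv(2)])
    show "(\<lambda>n. phi ((U \<circ> \<sigma>) n) ((W \<circ> \<sigma>) n)) \<longlonglongrightarrow> phi v l"
      by (rule tendsto[OF Uv Wl l(1)]) (simp add: W(1))
    show "\<And>n. dist (phi ((U \<circ> \<sigma>) n) ((W \<circ> \<sigma>) n)) ((W \<circ> \<sigma>) n) \<le> inverse (real (Suc (\<sigma> n)))"
      using W(3) by (simp add: less_imp_le)
  qed
  moreover have "0 < v" "v < \<tau>0" using l(2) e by auto
  ultimately have "fixd l" using \<tau>0 l(1) by blast
  then have ge: "\<And>n. dist ((W \<circ> \<sigma>) n) l \<ge> \<rho>" using W(4) l(1) by simp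
  have lim: "(\<lambda>n. dist ((W \<circ> \<sigma>) n) l) \<longlonglongrightarrow> 0"
    using tendsto_dist_iff[THEN iffD1, OF Wl] by simp
  have "\<rho> \<le> 0" by (rule LIMSEQ_le_const[OF lim]) (use ge in auto)
  then show False using \<rho> by simp
qed

lemma exit:
  assumes F: "\<forall>q\<in>S. \<forall>w\<in>S. fixd q \<and> (\<forall>t. dist q (phi t w) < \<delta>0) \<longrightarrow> w = q"
    and r: "r > 0" "r < \<delta>0" and e: "e > 0"
  shows "\<exists>\<delta>3>0. \<forall>p\<in>S. \<forall>w\<in>S. \<forall>L. fixd p \<and> e \<le> L \<and> (\<forall>v\<in>{0..L}. dist p (phi v w) \<le> r) \<and>
            dist w (phi L w) < \<delta>3 \<longrightarrow> dist p (phi L w) < r / 8"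
proof (rule ccontr)
  assume A: "\<not> ?thesis"
  have "\<exists>pwl. fst pwl \<in> S \<and> fst (snd pwl) \<in> S \<and> fixd (fst pwl) \<and> e \<le> snd (snd pwl) \<and>
            (\<forall>v\<in>{0..snd (snd pwl)}. dist (fst pwl) (phi v (fst (snd pwl))) \<le> r) \<and>
            dist (fst (snd pwl)) (phi (snd (snd pwl)) (fst (snd pwl))) < inverse (real (Suc n)) \<and>
            dist (fst pwl) (phi (snd (snd pwl)) (fst (snd pwl))) \<ge> r / 8" for n
  proof -
    have A': "\<forall>\<delta>3. \<delta>3 \<le> 0 \<or> (\<exists>p\<in>S. \<exists>w\<in>S. \<exists>L. fixd p \<and> e \<le> L \<and> (\<forall>v\<in>{0..L}. dist p (phi v w) \<le> r) \<and>
            dist w (phi L w) < \<delta>3 \<and> r / 8 \<le> dist p (phi L w))" using A by (auto simp: not_less)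
    have "\<not> inverse (real (Suc n)) \<le> 0" by simp
    then obtain p w L where "p \<in> S" "w \<in> S" "fixd p" "e \<le> L" "\<forall>v\<in>{0..L}. dist p (phi v w) \<le> r"
      "dist w (phi L w) < inverse (real (Suc n))" "r / 8 \<le> dist p (phi L w)"
      using A'[rule_format, of "inverse (real (Suc n))"] by blast
    then show ?thesis by (intro exI[of _ "(p, w, L)"]) simp
  qed
  then have "\<forall>n. \<exists>pwl. fst pwl \<in> S \<and> fst (snd pwl) \<in> S \<and> fixd (fst pwl) \<and> e \<le> snd (snd pwl) \<and>
            (\<forall>v\<in>{0..snd (snd pwl)}. dist (fst pwl) (phi v (fst (snd pwl))) \<le> r) \<and>
            dist (fst (snd pwl)) (phi (snd (snd pwl)) (fst (snd pwl))) < inverse (real (Suc n)) \<and>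
            dist (fst pwl) (phi (snd (snd pwl)) (fst (snd pwl))) \<ge> r / 8" by blast
  from choice[OF this] obtain PWL where PWL: "\<forall>n. fst (PWL n) \<in> S \<and> fst (snd (PWL n)) \<in> S \<and> fixd (fst (PWL n)) \<and> e \<le> snd (snd (PWL n)) \<and>
            (\<forall>v\<in>{0..snd (snd (PWL n))}. dist (fst (PWL n)) (phi v (fst (snd (PWL n)))) \<le> r) \<and>
            dist (fst (snd (PWL n))) (phi (snd (snd (PWL n))) (fst (snd (PWL n)))) < inverse (real (Suc n)) \<and>
            dist (fst (PWL n)) (phi (snd (snd (PWL n))) (fst (snd (PWL n)))) \<ge> r / 8" by blast
  define P where "P n = fst (PWL n)" for n
  define W where "W n = fst (snd (PWL n))" for n
  define Lg where "Lg n = snd (snd (PWL n))" for n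
  have W: "\<And>n. P n \<in> S" "\<And>n. W n \<in> S" "\<And>n. fixd (P n)" "\<And>n. e \<le> Lg n"
     "\<And>n v. v \<in> {0..Lg n} \<Longrightarrow> dist (P n) (phi v (W n)) \<le> r"
     "\<And>n. dist (W n) (phi (Lg n) (W n)) < inverse (real (Suc n))"
     "\<And>n. dist (P n) (phi (Lg n) (W n)) \<ge> r / 8"
    using PWL unfolding P_def W_def Lg_def by auto
  have "compact (S \<times> S)" using cpt by (intro compact_Times)
  then have "seq_compact (S \<times> S)" by (rule compact_imp_seq_compact)
  moreover have "\<forall>n. (\<lambda>n. (P n, W n)) n \<in> S \<times> S" using W by auto
  ultimately obtain pl \<sigma>1 where pl: "pl \<in> S \<times> S" "strict_mono (\<sigma>1::nat\<Rightarrow>nat)"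
      "((\<lambda>n. (P n, W n)) \<circ> \<sigma>1) \<longlonglongrightarrow> pl"
    by (rule seq_compactE)
  obtain p l where pld: "pl = (p, l)" by fastforce
  have pS: "p \<in> S" and lS: "l \<in> S" using pl(1) pld by auto
  obtain \<sigma>2 where s2: "strict_mono \<sigma>2" "monoseq (\<lambda>n. Lg (\<sigma>1 (\<sigma>2 n)))"
    using seq_monosub[of "\<lambda>n. Lg (\<sigma>1 n)"] by blast
  define \<sigma> where "\<sigma> = \<sigma>1 \<circ> \<sigma>2"
  have sig: "strict_mono \<sigma>" unfolding \<sigma>_def using pl(2) s2(1) by (rule strict_mono_o)
  have Pp: "(\<lambda>n. P (\<sigma> n)) \<longlonglongrightarrow> p"
    using LIMSEQ_subseq_LIMSEQ[OF tendsto_fst[OF pl(3)] s2(1)] pld by (simp add: o_def \<sigma>_def)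
  have Wl: "(\<lambda>n. W (\<sigma> n)) \<longlonglongrightarrow> l"
    using LIMSEQ_subseq_LIMSEQ[OF tendsto_snd[OF pl(3)] s2(1)] pld by (simp add: o_def \<sigma>_def)
  have mono: "monoseq (\<lambda>n. Lg (\<sigma> n))" using s2(2) by (simp add: \<sigma>_def)
  define Y where "Y n = phi (Lg (\<sigma> n)) (W (\<sigma> n))" for n
  have YS: "Y n \<in> S" for n using W(2) by (simp add: Y_def)
  have pfix: "fixd p" unfolding fixd_def
  proof
    fix t
    have "(\<lambda>n. phi t (P (\<sigma> n))) \<longlonglongrightarrow> phi t p"
      by (rule tendsto[OF tendsto_const Pp pS]) (simp add: W(1))
    moreover have "(\<lambda>n. phi t (P (\<sigma> n))) = (\<lambda>n. P (\<sigma> n))" using W(3) by (simp add: fixd_def)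
    ultimately show "phi t p = p" using Pp LIMSEQ_unique by metis
  qed
  have Yl: "Y \<longlonglongrightarrow> l"
  proof (rule lim_close[OF Wl])
    show "(\<lambda>n. dist (W (\<sigma> n)) (Y n)) \<longlonglongrightarrow> 0"
    proof (rule Lim_null_comparison[OF _ LIMSEQ_inverse_real_of_nat])
      show "\<forall>\<^sub>F n in sequentially. norm (dist (W (\<sigma> n)) (Y n)) \<le> inverse (real (Suc n))"
      proof (intro always_eventually allI)
        fix n
        have i: "inverse (real (Suc (\<sigma> n))) \<le> inverse (real (Suc n))"
          using seq_suble[OF sig, of n] by (intro le_imp_inverse_le) auto
        have "norm (dist (W (\<sigma> n)) (Y n)) = dist (W (\<sigma> n)) (Y n)" by simp
        then show "norm (dist (W (\<sigma> n)) (Y n)) \<le> inverse (real (Suc n))"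
          using W(6)[of "\<sigma> n"] i unfolding Y_def by linarith
      qed
    qed
  qed
  have pl8: "dist p l \<ge> r / 8"
  proof (rule LIMSEQ_le_const[OF tendsto_dist[OF Pp Yl]])
    show "\<exists>N. \<forall>n\<ge>N. r / 8 \<le> dist (P (\<sigma> n)) (Y n)" using W(7) by (simp add: Y_def)
  qed
  have all: "dist p (phi t l) \<le> r" for t
  proof (cases "\<exists>M. \<forall>n. Lg (\<sigma> n) \<le> M")
    case True
    then obtain M where M: "\<And>n. Lg (\<sigma> n) \<le> M" by blast
    have "Bseq (\<lambda>n. Lg (\<sigma> n))"
    proof (rule BseqI'[of _ M])
      fix n
      show "norm (Lg (\<sigma> n)) \<le> M" using M[of n] W(4)[of "\<sigma> n"] e by simp
    qed
    then obtain L where L: "(\<lambda>n. Lg (\<sigma> n)) \<longlonglongrightarrow> L"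
      using Bseq_monoseq_convergent[OF _ mono] convergentD by blast
    have Le: "e \<le> L" by (rule LIMSEQ_le_const[OF L]) (use W(4) in auto)
    have "Y \<longlonglongrightarrow> phi L l" unfolding Y_def by (rule tendsto[OF L Wl lS]) (simp add: W(2))
    then have per: "phi L l = l" using Yl LIMSEQ_unique by blast
    have seg: "dist p (phi v l) \<le> r" if v: "v \<in> {0..L}" for v
    proof -
      have "(\<lambda>n. min v (Lg (\<sigma> n))) \<longlonglongrightarrow> min v L" by (intro tendsto_intros L)
      then have "(\<lambda>n. phi (min v (Lg (\<sigma> n))) (W (\<sigma> n))) \<longlonglongrightarrow> phi (min v L) l"
        by (rule tendsto[OF _ Wl lS]) (simp add: W(2))
      then have lim: "(\<lambda>n. dist (P (\<sigma> n)) (phi (min v (Lg (\<sigma> n))) (W (\<sigma> n)))) \<longlonglongrightarrow> dist p (phi v l)"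
        using v by (intro tendsto_intros Pp) auto
      show ?thesis
      proof (rule LIMSEQ_le_const2[OF lim], intro exI allI impI)
        fix n
        have "min v (Lg (\<sigma> n)) \<in> {0..Lg (\<sigma> n)}" using v W(4)[of "\<sigma> n"] e by auto
        then show "dist (P (\<sigma> n)) (phi (min v (Lg (\<sigma> n))) (W (\<sigma> n))) \<le> r" by (rule W(5))
      qed
    qed
    have "L > 0" using Le e by simp
    then obtain v where "v \<in> {0..L}" "phi t l = phi v l" using periodic[OF lS _ per] by blast
    then show ?thesis using seg by simp
  next
    case False
    have inc: "incseq (\<lambda>n. Lg (\<sigma> n))"
    proof -
      have "\<not> decseq (\<lambda>n. Lg (\<sigma> n))"
      proof
        assume "decseq (\<lambda>n. Lg (\<sigma> n))"
        then have "\<forall>n. Lg (\<sigma> n) \<le> Lg (\<sigma> 0)" by (simp add: decseq_def)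
        then show False using False by blast
      qed
      then show ?thesis using mono monoseq_iff by blast
    qed
    have big: "\<exists>N. \<forall>n\<ge>N. T \<le> Lg (\<sigma> n)" for T
    proof -
      obtain N where N: "Lg (\<sigma> N) > T" using False by (meson not_le)
      have "\<forall>n\<ge>N. T \<le> Lg (\<sigma> n)"
      proof (intro allI impI)
        fix n assume "N \<le> n"
        then have "Lg (\<sigma> N) \<le> Lg (\<sigma> n)" using inc unfolding incseq_def by blast
        then show "T \<le> Lg (\<sigma> n)" using N by simp
      qed
      then show ?thesis by blast
    qed
    show ?thesis
    proof (cases "t \<ge> 0")
      case True
      have lim: "(\<lambda>n. dist (P (\<sigma> n)) (phi t (W (\<sigma> n)))) \<longlonglongrightarrow> dist p (phi t l)"
        by (intro tendsto_intros Pp tendsto[OF tendsto_const Wl lS]) (simp add: W(2))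
      obtain N where N: "\<forall>n\<ge>N. t \<le> Lg (\<sigma> n)" using big by blast
      show ?thesis
      proof (rule LIMSEQ_le_const2[OF lim], intro exI[of _ N] allI impI)
        fix n assume "N \<le> n"
        then have "t \<in> {0..Lg (\<sigma> n)}" using N True by auto
        then show "dist (P (\<sigma> n)) (phi t (W (\<sigma> n))) \<le> r" by (rule W(5))
      qed
    next
      case False
      have lim: "(\<lambda>n. dist (P (\<sigma> n)) (phi t (Y n))) \<longlonglongrightarrow> dist p (phi t l)"
        by (intro tendsto_intros Pp tendsto[OF tendsto_const Yl lS]) (simp add: YS)
      obtain N where N: "\<forall>n\<ge>N. - t \<le> Lg (\<sigma> n)" using big by blast
      have eq: "phi t (Y n) = phi (t + Lg (\<sigma> n)) (W (\<sigma> n))" for n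
        unfolding Y_def using add[OF W(2)] by simp
      show ?thesis
      proof (rule LIMSEQ_le_const2[OF lim], intro exI[of _ N] allI impI)
        fix n assume "N \<le> n"
        then have "t + Lg (\<sigma> n) \<in> {0..Lg (\<sigma> n)}" using N False by auto
        then show "dist (P (\<sigma> n)) (phi t (Y n)) \<le> r" unfolding eq by (rule W(5))
      qed
    qed
  qed
  have "\<forall>t. dist p (phi t l) < \<delta>0" using all r(2) by (meson le_less_trans)
  then have "l = p" using F pS lS pfix by blast
  then show False using pl8 r by simp
qed

lemma kstar_imp_exp:
  assumes ks: "kstar_expansive_flow S phi"
  shows "expansive_flow S phi"
  unfolding expansive_flow_def
proof (intro allI impI)
  fix \<beta> :: real assume \<beta>: "\<beta> > 0"
  obtain \<delta>0 where d0: "\<delta>0 > 0" and F: "\<forall>q\<in>S. \<forall>w\<in>S. fixd q \<and> (\<forall>t. dist q (phi t w) < \<delta>0) \<longrightarrow> w = q"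
    using F0[OF ks] by blast
  define r where "r = min \<delta>0 \<beta> / 3"
  have r: "r > 0" "r < \<delta>0" "2 * r < \<beta>" using d0 \<beta> unfolding r_def by auto
  obtain \<tau>0 where t0p: "\<tau>0 > 0" and T0: "\<forall>w\<in>S. \<forall>u. 0 < u \<and> u < \<tau>0 \<and> phi u w = w \<longrightarrow> fixd w"
    using tau0[OF ks] by blast
  have r3: "r / 3 > 0" using r by simp
  obtain \<tau>w where twp: "\<tau>w > 0" and TW: "\<forall>y\<in>S. \<forall>a b. \<bar>a - b\<bar> \<le> \<tau>w \<longrightarrow> dist (phi a y) (phi b y) < r / 3"
    using UCpath[OF r3] by blast
  define e where "e = min (\<tau>0 / 4) (\<tau>w / 2)"
  have e: "e > 0" "2 * e < \<tau>0" "2 * e \<le> \<tau>w" using t0p twp unfolding e_def by auto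
  have r6: "r / 6 > 0" using r by simp
  obtain \<delta>2 where d2: "\<delta>2 > 0" and CR: "\<forall>w\<in>S. \<forall>u\<in>{e..2*e}. dist (phi u w) w < \<delta>2 \<longrightarrow> (\<exists>p\<in>S. fixd p \<and> dist w p < r / 6)"
    using crossing[OF T0 e(1,2) r6] by blast
  obtain \<delta>3 where d3: "\<delta>3 > 0" and EX: "\<forall>p\<in>S. \<forall>w\<in>S. \<forall>L. fixd p \<and> e \<le> L \<and> (\<forall>v\<in>{0..L}. dist p (phi v w) \<le> r) \<and>
            dist w (phi L w) < \<delta>3 \<longrightarrow> dist p (phi L w) < r / 8"
    using exit[OF F r(1,2) e(1)] by blast
  obtain \<delta>k where dk: "\<delta>k > 0" and K: "\<forall>x\<in>S. \<forall>y\<in>S. \<forall>h\<in>incr_homeos.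
        (\<forall>t. dist (phi (h t) x) (phi t y) < \<delta>k) \<longrightarrow> (\<exists>s t0. \<bar>s\<bar> < e \<and> phi (h t0) x = phi (t0 + s) y)"
  proof -
    have "\<exists>\<delta>>0. \<forall>x\<in>S. \<forall>y\<in>S. \<forall>h\<in>incr_homeos.
        (\<forall>t. dist (phi (h t) x) (phi t y) < \<delta>) \<longrightarrow> (\<exists>s t0. \<bar>s\<bar> < e \<and> phi (h t0) x = phi (t0 + s) y)"
      using ks[unfolded kstar_expansive_flow_def, rule_format, OF e(1)] .
    then show ?thesis using that by blast
  qed
  define \<delta> where "\<delta> = min \<delta>k (min \<delta>2 (min \<delta>3 (r / 8)))"
  have \<delta>: "\<delta> > 0" "\<delta> \<le> \<delta>k" "\<delta> \<le> \<delta>2" "\<delta> \<le> \<delta>3" "\<delta> \<le> r / 8"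
    using dk d2 d3 r unfolding \<delta>_def by auto
  show "\<exists>\<delta>>0. \<forall>x\<in>S. \<forall>y\<in>S. \<forall>h\<in>incr_homeos. (\<forall>t. dist (phi (h t) x) (phi t y) < \<delta>) \<longrightarrow>
          orbit_dist S phi x y < \<beta>"
  proof (rule exI[of _ \<delta>], intro conjI ballI impI)
    fix x y h assume x: "x \<in> S" and y: "y \<in> S" and h: "h \<in> incr_homeos"
      and sh0: "\<forall>t. dist (phi (h t) x) (phi t y) < \<delta>"
    note hp = H_props[OF h]
    have "\<forall>t. dist (phi (h t) x) (phi t y) < \<delta>k" using sh0 \<delta>(2) by (meson less_le_trans)
    then obtain s t0 where st: "\<bar>s\<bar> < e" "phi (h t0) x = phi (t0 + s) y" using K x y h by blast
    define c where "c = t0 + s - h t0"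
    have xc: "x = phi c y"
    proof -
      have "x = phi (- h t0) (phi (h t0) x)" using x by simp
      also have "\<dots> = phi (- h t0) (phi (t0 + s) y)" using st(2) by simp
      also have "\<dots> = phi c y" unfolding c_def using add[OF y, of "- h t0" "t0 + s"] by simp
      finally show ?thesis .
    qed
    define G where "G t = h t + c" for t
    define Gi where "Gi w = inv h (w - c)" for w
    define \<gamma> where "\<gamma> t = phi t y" for t
    have cg: "continuous_on UNIV \<gamma>" unfolding \<gamma>_def by (rule cont_t[OF y])
    have cG: "continuous_on UNIV G" unfolding G_def by (intro continuous_intros hp(1))
    have cGi: "continuous_on UNIV Gi" unfolding Gi_def
      by (intro continuous_on_compose2[OF hp(2)] continuous_intros) auto
    have GGi: "G (Gi t) = t" for t unfolding G_def Gi_def using hp(4) by simp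
    have GiG: "Gi (G t) = t" for t unfolding G_def Gi_def using hp(3) by simp
    have mG: "mono G" unfolding G_def mono_def using hp(5) by (simp add: strict_mono_less_eq)
    have e0: "e > 0" by (rule e(1))
    have UCw: "dist (\<gamma> a) (\<gamma> b) < r/3" if "\<bar>a - b\<bar> \<le> 2*e" for a b
      unfolding \<gamma>_def using TW y that e(3) by auto
    let ?P = "{p. p \<in> S \<and> fixd p}"
    have cross: "\<exists>p\<in>?P. dist (\<gamma> t) p < r/3 \<and> dist (\<gamma> (t+u)) p < r/3"
      if hh: "e \<le> u" "u \<le> 2*e" "dist (\<gamma> t) (\<gamma> (t+u)) < \<delta>" for t u
    proof -
      have eq: "phi u (phi t y) = \<gamma> (t + u)" unfolding \<gamma>_def using add[OF y, of u t] by (simp add: add.commute)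
      have "dist (phi u (phi t y)) (phi t y) < \<delta>2"
        using hh(3) \<delta>(3) unfolding eq by (simp add: \<gamma>_def dist_commute)
      moreover have "u \<in> {e..2*e}" using hh by simp
      moreover have "phi t y \<in> S" using y by simp
      ultimately obtain p where p: "p \<in> S" "fixd p" "dist (phi t y) p < r / 6" using CR by blast
      have "dist (\<gamma> (t+u)) p \<le> dist (\<gamma> (t+u)) (\<gamma> t) + dist (\<gamma> t) p" by (rule dist_triangle)
      then have "dist (\<gamma> (t+u)) p < r/3" using hh(3) \<delta>(5) p(3) r(1) unfolding \<gamma>_def
        by (simp add: dist_commute)
      moreover have "dist (\<gamma> t) p < r/3" using p(3) r unfolding \<gamma>_def by simp
      ultimately show ?thesis using p by blast
    qed
    have ext: "dist p (\<gamma> (a+L)) < r/2 \<and> dist p (\<gamma> a) < r/2"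
      if hh: "p \<in> ?P" "e \<le> L" "\<forall>v\<in>{0..L}. dist p (\<gamma> (a+v)) \<le> r" "dist (\<gamma> a) (\<gamma> (a+L)) < \<delta>" for p a L
    proof -
      have eq: "phi v (phi a y) = \<gamma> (a + v)" for v
        unfolding \<gamma>_def using add[OF y, of v a] by (simp add: add.commute)
      have "\<forall>v\<in>{0..L}. dist p (phi v (phi a y)) \<le> r" using hh(3) unfolding eq .
      moreover have "dist (phi a y) (phi L (phi a y)) < \<delta>3" using hh(4) \<delta>(4) unfolding eq
        by (simp add: \<gamma>_def)
      ultimately have "dist p (phi L (phi a y)) < r / 8" using EX hh(1,2) y by simp
      then have A1: "dist p (\<gamma> (a+L)) < r / 8" unfolding eq .
      have "dist p (\<gamma> a) \<le> dist p (\<gamma> (a+L)) + dist (\<gamma> (a+L)) (\<gamma> a)" by (rule dist_triangle)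
      then have "dist p (\<gamma> a) < r/2" using A1 hh(4) \<delta>(5) r by (simp add: dist_commute)
      then show ?thesis using A1 r by simp
    qed
    have sh: "dist (\<gamma> (G t)) (\<gamma> t) < \<delta>" for t
    proof -
      have "\<gamma> (G t) = phi (h t) x" unfolding \<gamma>_def G_def xc using add[OF y] by simp
      then show ?thesis using sh0 unfolding \<gamma>_def by simp
    qed
    have lag0: "\<bar>G t0 - t0\<bar> \<le> 2*e" unfolding G_def c_def using st(1) by simp
    obtain p where p: "\<forall>u. min 0 (G 0) \<le> u \<and> u \<le> max 0 (G 0) \<longrightarrow> dist p (\<gamma> u) \<le> r"
      using core_all[OF cg cG cGi GGi GiG mG e0 r(1) UCw cross ext sh lag0, of 0] by blast
    have G0: "G 0 = c" unfolding G_def using hp(6) by simp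
    let ?seg = "(\<lambda>t. phi t y) ` {min 0 c..max 0 c}"
    have xs: "x \<in> ?seg" using xc by auto
    have ys: "y \<in> ?seg" by (rule image_eqI[where x=0]) (use y in auto)
    have orb: "y \<in> range (\<lambda>t. phi t x)"
    proof
      show "y = phi (- c) x" using xc y by simp
    qed simp
    have "orbit_dist S phi x y \<le> diameter ?seg"
      by (rule od_upper[OF y _ xs ys orb]) simp
    also have "diameter ?seg \<le> 2 * r"
    proof (rule diam_le)
      show "bounded ?seg" by (rule seg_bounded[OF y])
      show "?seg \<noteq> {}" using ys by blast
      fix a b assume a: "a \<in> ?seg" and b: "b \<in> ?seg"
      then obtain ua ub where "ua \<in> {min 0 c..max 0 c}" "ub \<in> {min 0 c..max 0 c}" "a = \<gamma> ua" "b = \<gamma> ub"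
        unfolding \<gamma>_def by auto
      then have "dist p a \<le> r" "dist p b \<le> r" using p G0 by auto
      then show "dist a b \<le> 2 * r" using dist_triangle[of a b p] by (simp add: dist_commute)
    qed
    also have "\<dots> < \<beta>" by (rule r(3))
    finally show "orbit_dist S phi x y < \<beta>" .
  qed (rule \<delta>(1))
qed


end

theorem theorem1p3:
  fixes S :: "'a::metric_space set" and phi :: "real \<Rightarrow> 'a \<Rightarrow> 'a"
  assumes "compact S" and "is_flow S phi"
  shows "expansive_flow S phi \<longleftrightarrow> kstar_expansive_flow S phi"
proof -
  interpret cflow S phi by (unfold_locales; fact assms)
  show ?thesis using exp_imp_kstar kstar_imp_exp by blast
qed

end
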